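(* Let $P$ be a $d$-dimensional convex polytope with vertex $x$, and let $T$ be a face of $P$ containing $x$. Let $P'$ be $P$ truncated at $T$, and let $F$ be the facet of $P'$ that is entirely contained in the boundary hyperplane of the halfspace used for the truncation. Let $w$ be a vertex of $P$ adjacent to $x$ (in the graph of $P$) and not contained in $T$, and let $v$ be the vertex of $P'$ contained in $F$ and adjacent to $w$ (with $w$ regarded as a vertex of $P'$). If $P$ is simple at $w$, then $P'$ is simple at $v$.
   Context: For a polytope $P$ and face $T$, "$P$ truncated at $T$" is the polytope obtained by intersecting $P$ with a closed halfspace which contains no vertex of $T$ and whose interior contains all vertices of $P$ not in $T$. A $d$-dimensional polytope is simple at a vertex $v$ if $v$ has degree $d$ in the graph of the polytope (graph: vertices of the polytope, adjacent iff they lie on a common $1$-dimensional face). *)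

theory Defs
  imports "HOL-Analysis.Analysis"
begin

definition poly_adjacent :: "'a::euclidean_space set \<Rightarrow> 'a \<Rightarrow> 'a \<Rightarrow> bool" where
  "poly_adjacent P u v \<longleftrightarrow>
     u extreme_point_of P \<and> v extreme_point_of P \<and> u \<noteq> v \<and>
     (\<exists>e. e edge_of P \<and> u \<in> e \<and> v \<in> e)"

definition poly_degree :: "'a::euclidean_space set \<Rightarrow> 'a \<Rightarrow> nat" where
  "poly_degree P v = card {u. poly_adjacent P v u}"

definition simple_at :: "'a::euclidean_space set \<Rightarrow> 'a \<Rightarrow> bool" where
  "simple_at P v \<longleftrightarrow> v extreme_point_of P \<and> int (poly_degree P v) = aff_dim P"

definition truncating_halfspace :: "'a::euclidean_space set \<Rightarrow> 'a set \<Rightarrow> 'a \<Rightarrow> real \<Rightarrow> bool" where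
  "truncating_halfspace P T a b \<longleftrightarrow>
     a \<noteq> 0 \<and>
     (\<forall>t. t extreme_point_of T \<longrightarrow> a \<bullet> t > b) \<and>
     (\<forall>u. u extreme_point_of P \<and> u \<notin> T \<longrightarrow> a \<bullet> u < b)"

end

theory Submission
  imports Defs
begin


definition incone :: "'a::euclidean_space set \<Rightarrow> 'a \<Rightarrow> 'a \<Rightarrow> bool" where
  "incone N z y \<longleftrightarrow> (\<exists>\<mu>. (\<forall>u\<in>N. 0 \<le> \<mu> u) \<and> y = (\<Sum>u\<in>N. \<mu> u *\<^sub>R (u - z)))"

lemma incone_0: "incone N z 0"
  unfolding incone_def by (rule exI[of _ "\<lambda>_. 0"]) auto

lemma incone_add: assumes "incone N z y1" "incone N z y2" shows "incone N z (y1 + y2)"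
proof -
  obtain m1 where m1: "\<forall>u\<in>N. 0 \<le> m1 u" "y1 = (\<Sum>u\<in>N. m1 u *\<^sub>R (u - z))" using assms(1) incone_def by blast
  obtain m2 where m2: "\<forall>u\<in>N. 0 \<le> m2 u" "y2 = (\<Sum>u\<in>N. m2 u *\<^sub>R (u - z))" using assms(2) incone_def by blast
  show ?thesis unfolding incone_def
    by (rule exI[of _ "\<lambda>u. m1 u + m2 u"]) (simp add: m1 m2 scaleR_add_left sum.distrib)
qed

lemma incone_scale: assumes "incone N z y" "0 \<le> c" shows "incone N z (c *\<^sub>R y)"
proof -
  obtain m1 where m1: "\<forall>u\<in>N. 0 \<le> m1 u" "y = (\<Sum>u\<in>N. m1 u *\<^sub>R (u - z))" using assms(1) incone_def by blast
  show ?thesis unfolding incone_def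
    by (rule exI[of _ "\<lambda>u. c * m1 u"]) (simp add: m1 assms scaleR_sum_right)
qed

lemma incone_gen: assumes "finite N" "u \<in> N" shows "incone N z (u - z)"
  unfolding incone_def
  by (rule exI[of _ "\<lambda>x. if x = u then 1 else 0"]) (simp add: assms sum.delta if_distrib[of "\<lambda>c. c *\<^sub>R _"] cong: if_cong)

lemma incone_sum: assumes "finite W" "\<And>r. r \<in> W \<Longrightarrow> incone N z (f r)" "\<And>r. r \<in> W \<Longrightarrow> 0 \<le> c r"
  shows "incone N z (\<Sum>r\<in>W. c r *\<^sub>R f r)"
  using assms
proof (induction W rule: finite_induct)
  case empty then show ?case by (simp add: incone_0)
next
  case (insert x F) then show ?case by (simp add: incone_add incone_scale)
qed

lemma incone_hull:
  assumes "finite W" "\<And>r. r \<in> W \<Longrightarrow> incone N z (r - z)" "q \<in> convex hull W"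
  shows "incone N z (q - z)"
proof -
  obtain c where c: "\<forall>x\<in>W. 0 \<le> c x" "sum c W = 1" "(\<Sum>x\<in>W. c x *\<^sub>R x) = q"
    using assms(3) convex_hull_finite[OF assms(1)] by auto
  have "q - z = (\<Sum>x\<in>W. c x *\<^sub>R x) - (\<Sum>x\<in>W. c x) *\<^sub>R z" using c by simp
  also have "\<dots> = (\<Sum>x\<in>W. c x *\<^sub>R (x - z))"
    by (simp add: scaleR_diff_right sum_subtractf scaleR_sum_left)
  finally show ?thesis using incone_sum[OF assms(1), of N z "\<lambda>x. x - z" c] assms(2) c(1) by simp
qed

lemma polytope_ext:
  fixes P :: "'a::euclidean_space set"
  assumes "polytope P"
  shows "finite {v. v extreme_point_of P}" "P = convex hull {v. v extreme_point_of P}"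
proof -
  obtain S where S: "finite S" "P = convex hull S" using assms polytope_def by blast
  show "P = convex hull {v. v extreme_point_of P}" using Krein_Milman_polytope[OF S(1)] S(2) by simp
  show "finite {v. v extreme_point_of P}"
    using finite_polyhedron_extreme_points polytope_imp_polyhedron assms by blast
qed



lemma edge_through:
  fixes Q :: "'a::euclidean_space set"
  assumes polyQ: "polytope Q" and zQ: "z extreme_point_of Q"
   and hz: "h \<bullet> z = \<beta>"
   and hv: "\<And>p. p extreme_point_of Q \<Longrightarrow> p \<noteq> z \<Longrightarrow> h \<bullet> p < \<gamma>"
   and gb: "\<gamma> < \<beta>"
   and r: "r extreme_point_of (Q \<inter> {x. h \<bullet> x = \<gamma>})"
  shows "\<exists>p. poly_adjacent Q z p \<and> r \<in> closed_segment z p"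
proof -
  define H where "H = {x. h \<bullet> x = \<gamma>}"
  have rQ: "r \<in> Q" and hr: "h \<bullet> r = \<gamma>" using r by (auto simp: extreme_point_of_def)
  define FF where "FF = {G. G face_of Q \<and> r \<in> G}"
  have "Q \<in> FF" using FF_def rQ face_of_refl polytope_imp_convex polyQ by blast
  then obtain G where GF: "G \<in> FF" and Gmin: "\<And>G'. G' \<in> FF \<Longrightarrow> nat (aff_dim G + 1) \<le> nat (aff_dim G' + 1)"
    using ex_has_least_nat[of "\<lambda>G. G \<in> FF" Q "\<lambda>G. nat (aff_dim G + 1)"] by blast
  have Gmin': "aff_dim G \<le> aff_dim G'" if "G' \<in> FF" for G'
    using Gmin[OF that] aff_dim_geq[of G] aff_dim_geq[of G'] by linarith
  have GQ: "G face_of Q" and rG: "r \<in> G" using GF FF_def by auto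
  have polyG: "polytope G" using face_of_polytope_polytope polyQ GQ by blast
  have rI: "r \<in> rel_interior G"
  proof (rule ccontr)
    assume "r \<notin> rel_interior G"
    then have "r \<in> rel_frontier G" using rG polytope_imp_closed[OF polyG] closure_closed
      by (simp add: rel_frontier_def)
    then obtain F where F: "F facet_of G" "r \<in> F"
      using rel_frontier_of_polyhedron[OF polytope_imp_polyhedron[OF polyG]] by blast
    have "F face_of Q" using F(1) facet_of_imp_face_of face_of_trans GQ by blast
    then have "F \<in> FF" using F FF_def by blast
    then show False using Gmin' F(1) unfolding facet_of_def by force
  qed
  have notsub: "\<not> G \<subseteq> H"
  proof
    assume GH: "G \<subseteq> H"
    have "G \<noteq> {}" using rG by blast
    then have "{v. v extreme_point_of G} \<noteq> {}" using polytope_ext(2)[OF polyG] by auto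
    then obtain p where p: "p extreme_point_of G" by blast
    then have pQ: "p extreme_point_of Q" and pG: "p \<in> G" using extreme_point_of_face[OF GQ] by auto
    have "h \<bullet> p = \<gamma>" using GH pG H_def by auto
    then show False using hv[OF pQ] hz gb by (cases "p = z") auto
  qed
  obtain e where e: "e > 0" "ball r e \<inter> affine hull G \<subseteq> G" using rI mem_rel_interior_ball by blast
  define A where "A = affine hull G \<inter> H"
  have affA: "affine A" unfolding A_def H_def by (simp add: affine_Int affine_hyperplane)
  have rA: "r \<in> A" unfolding A_def H_def using hull_inc[OF rG] hr by simp
  have Aball: "A \<inter> ball r e = {r}"
  proof (rule ccontr)
    assume "A \<inter> ball r e \<noteq> {r}"
    moreover have "r \<in> A \<inter> ball r e" using rA e(1) by simp
    ultimately obtain s where "s \<in> A \<inter> ball r e" "s \<noteq> r" by blast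
    then have s: "s \<in> A" "s \<in> ball r e" "s \<noteq> r" by auto
    define s' where "s' = 2 *\<^sub>R r + (-1) *\<^sub>R s"
    have s'A: "s' \<in> A" unfolding s'_def using mem_affine[OF affA rA s(1), of 2 "-1"] by simp
    have rs': "r - s' = s - r" unfolding s'_def by (simp add: algebra_simps scaleR_2)
    have "dist r s' = dist r s" by (simp add: dist_norm rs' norm_minus_commute)
    then have s'b: "s' \<in> ball r e" using s(2) by simp
    have GQs: "G \<subseteq> Q" using face_of_imp_subset[OF GQ] .
    have "s \<in> G" "s' \<in> G" using s(1,2) s'A s'b e(2) unfolding A_def by blast+
    moreover have "s \<in> H" "s' \<in> H" using s(1) s'A unfolding A_def by blast+
    ultimately have "s \<in> Q \<inter> H" "s' \<in> Q \<inter> H" using GQs by blast+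
    moreover have "s \<noteq> s'"
    proof
      assume "s = s'"
      then have "r - s = s - r" using rs' by simp
      then have "2 *\<^sub>R r = 2 *\<^sub>R s" by (simp add: algebra_simps scaleR_2)
      then show False using s(3) by simp
    qed
    moreover have "r = midpoint s s'" unfolding s'_def midpoint_def
      by (simp add: algebra_simps scaleR_2) (simp flip: scaleR_add_left)
    ultimately have "r \<in> open_segment s s'" "s \<in> Q \<inter> H" "s' \<in> Q \<inter> H" by auto
    moreover have "\<forall>a\<in>Q \<inter> H. \<forall>b\<in>Q \<inter> H. r \<notin> open_segment a b"
      using r unfolding extreme_point_of_def H_def by simp
    ultimately show False by blast
  qed
  have cA: "convex A" using affA affine_imp_convex by blast
  have "A \<inter> ball r e \<noteq> {}" using Aball by simp
  then have "affine hull (A \<inter> ball r e) = affine hull A"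
    using affine_hull_convex_Int_open[OF cA open_ball] by blast
  then have "A = {r}" using Aball affine_hull_eq[of A] affA by (simp add: hull_same)
  then have "aff_dim A = 0" by simp
  moreover have "aff_dim A = aff_dim G - 1"
  proof -
    have "G \<subseteq> affine hull G" by (rule hull_subset)
    then have "\<not> affine hull G \<subseteq> H" using notsub by blast
    then show ?thesis using aff_dim_affine_Int_hyperplane[of "affine hull G" h \<gamma>] rA
      unfolding A_def H_def by (simp add: affine_affine_hull) blast
  qed
  ultimately have dG: "aff_dim G = 1" by simp
  obtain n where "n simplex G" using polytope_lowdim_imp_simplex[OF polyG] dG by auto
  then have "1 simplex G" using aff_dim_simplex dG by metis
  then obtain C where C: "\<not> affine_dependent C" "int (card C) = 2" "G = convex hull C"
    unfolding simplex_def by auto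
  then obtain p1 p2 where p12: "C = {p1, p2}" "p1 \<noteq> p2" using card_2_iff[of C] by auto
  have Gseg: "G = closed_segment p1 p2" using C(3) p12 segment_convex_hull[of p1 p2] by simp
  have "p1 extreme_point_of G" "p2 extreme_point_of G" using Gseg by (simp_all add: extreme_point_of_segment)
  then have p1Q: "p1 extreme_point_of Q" and p2Q: "p2 extreme_point_of Q"
    using extreme_point_of_face[OF GQ] by blast+
  have p1G: "p1 \<in> G" and p2G: "p2 \<in> G" using Gseg by simp_all
  have edge: "G edge_of Q" using GQ dG edge_of_def by blast
  show ?thesis
  proof (cases "p1 = z \<or> p2 = z")
    case True
    then show ?thesis
    proof
      assume p1z: "p1 = z"
      have "poly_adjacent Q z p2" unfolding poly_adjacent_def
        using zQ p2Q p12(2) edge p1G p2G p1z by blast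
      moreover have "r \<in> closed_segment z p2" using rG Gseg p1z by simp
      ultimately show ?thesis by blast
    next
      assume p2z: "p2 = z"
      have "poly_adjacent Q z p1" unfolding poly_adjacent_def
        using zQ p1Q p12(2) edge p1G p2G p2z by blast
      moreover have "r \<in> closed_segment z p1" using rG Gseg p2z closed_segment_commute by metis
      ultimately show ?thesis by blast
    qed
  next
    case False
    then have h1: "h \<bullet> p1 < \<gamma>" and h2: "h \<bullet> p2 < \<gamma>" using hv p1Q p2Q by auto
    obtain t where t: "0 \<le> t" "t \<le> 1" "r = (1 - t) *\<^sub>R p1 + t *\<^sub>R p2"
      using rG Gseg in_segment(1) by blast
    have hr': "h \<bullet> r = (1 - t) * (h \<bullet> p1) + t * (h \<bullet> p2)" using t(3) by (simp add: inner_add_right)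
    have "(1 - t) * (h \<bullet> p1) + t * (h \<bullet> p2) < \<gamma>"
    proof (cases "t = 0")
      case True then show ?thesis using h1 by simp
    next
      case False
      then have "t * (h \<bullet> p2) < t * \<gamma>" using t(1) h2 by (intro mult_strict_left_mono) auto
      moreover have "(1 - t) * (h \<bullet> p1) \<le> (1 - t) * \<gamma>" using t(2) h1 by (intro mult_left_mono) auto
      ultimately show ?thesis by (simp add: algebra_simps)
    qed
    then show ?thesis using hr hr' by simp
  qed
qed



lemma vertex_cone:
  fixes Q :: "'a::euclidean_space set"
  assumes polyQ: "polytope Q" and zQ: "z extreme_point_of Q" and yQ: "y \<in> Q"
  shows "incone {u. poly_adjacent Q z u} z (y - z)"
proof -
  define NB where "NB = {u. poly_adjacent Q z u}"
  define V where "V = {v. v extreme_point_of Q}"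
  have finV: "finite V" and QV: "Q = convex hull V" using polytope_ext[OF polyQ] V_def by auto
  have finNB: "finite NB" using finV unfolding NB_def V_def poly_adjacent_def
    by (rule finite_subset[rotated]) auto
  have convQ: "convex Q" using polyQ polytope_imp_convex by blast
  have "incone NB z (p - z)" if pV: "p \<in> V" for p
  proof (cases "p = z")
    case True then show ?thesis using incone_0 by simp
  next
    case pz: False
    have "{z} face_of Q" using zQ face_of_singleton by blast
    then have "{z} exposed_face_of Q"
      using exposed_face_of_polyhedron polytope_imp_polyhedron polyQ by blast
    then obtain h \<beta> where hb: "Q \<subseteq> {x. h \<bullet> x \<le> \<beta>}" "{z} = Q \<inter> {x. h \<bullet> x = \<beta>}"
      unfolding exposed_face_of_def by blast
    have hz: "h \<bullet> z = \<beta>" using hb(2) by blast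
    have lt: "h \<bullet> p' < \<beta>" if "p' \<in> V" "p' \<noteq> z" for p'
    proof -
      have "p' \<in> Q" using that V_def extreme_point_of_def by auto
      then show ?thesis using hb that by force
    qed
    define m where "m = Max ((\<lambda>p. h \<bullet> p) ` (V - {z}))"
    have fin': "finite ((\<lambda>p. h \<bullet> p) ` (V - {z}))" using finV by simp
    have ne': "(\<lambda>p. h \<bullet> p) ` (V - {z}) \<noteq> {}" using pV pz by auto
    have mb: "m < \<beta>" unfolding m_def using Max_less_iff[OF fin' ne'] lt by auto
    have lem: "h \<bullet> p' \<le> m" if "p' \<in> V" "p' \<noteq> z" for p'
      unfolding m_def using that fin' by (intro Max_ge) auto
    define \<gamma> where "\<gamma> = (m + \<beta>) / 2"
    have g1: "m < \<gamma>" "\<gamma> < \<beta>" using mb \<gamma>_def by auto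
    have hp: "h \<bullet> p < \<gamma>" using lem[OF pV pz] g1 by simp
    define \<theta> where "\<theta> = (\<beta> - \<gamma>) / (\<beta> - h \<bullet> p)"
    have th1: "0 < \<theta>" unfolding \<theta>_def using hp g1 by (simp add: divide_pos_pos)
    have th2: "\<theta> \<le> 1" unfolding \<theta>_def using hp g1 by (simp add: divide_le_eq_1)
    note th = th1 th2
    define q where "q = (1 - \<theta>) *\<^sub>R z + \<theta> *\<^sub>R p"
    have pQ: "p \<in> Q" using pV V_def extreme_point_of_def by auto
    have zQ': "z \<in> Q" using zQ extreme_point_of_def by auto
    have qQ: "q \<in> Q" unfolding q_def using convQ zQ' pQ th by (intro convexD) auto
    have hq: "h \<bullet> q = \<gamma>"
    proof -
      have "h \<bullet> q = \<beta> - \<theta> * (\<beta> - h \<bullet> p)" unfolding q_def using hz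
        by (simp add: inner_add_right algebra_simps)
      also have "\<dots> = \<gamma>" using hp g1 \<theta>_def by (simp add: field_simps)
      finally show ?thesis .
    qed
    define W where "W = {r. r extreme_point_of (Q \<inter> {x. h \<bullet> x = \<gamma>})}"
    have polyQH: "polytope (Q \<inter> {x. h \<bullet> x = \<gamma>})"
      using polytope_Int_polyhedron[OF polyQ polyhedron_hyperplane] by blast
    have "incone NB z (q - z)"
    proof (rule incone_hull)
      show "finite W" using polytope_ext(1)[OF polyQH] W_def by simp
      show "q \<in> convex hull W" using polytope_ext(2)[OF polyQH] W_def qQ hq by auto
      fix r assume "r \<in> W"
      then obtain p' where p': "poly_adjacent Q z p'" "r \<in> closed_segment z p'"
        using edge_through[OF polyQ zQ hz _ g1(2), of r] lem g1 W_def V_def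
        by (metis (mono_tags, lifting) mem_Collect_eq order_le_less_trans)
      then obtain t where t: "0 \<le> t" "r = (1 - t) *\<^sub>R z + t *\<^sub>R p'" using in_segment(1) by blast
      have "r - z = t *\<^sub>R (p' - z)" using t by (simp add: algebra_simps)
      then show "incone NB z (r - z)" using incone_scale[OF incone_gen[OF finNB] t(1)] p' NB_def by auto
    qed
    moreover have "p - z = (1 / \<theta>) *\<^sub>R (q - z)" using th unfolding q_def
      by (simp add: algebra_simps)
    ultimately show ?thesis using incone_scale[of NB z "q - z" "1 / \<theta>"] th by simp
  qed
  then show ?thesis using incone_hull[OF finV] yQ QV NB_def by blast
qed



lemma lincomb_diff:
  fixes R :: "'b \<Rightarrow> 'a::real_vector"
  shows "(\<Sum>k\<in>K. a k *\<^sub>R R k) - (\<Sum>k\<in>K. b k *\<^sub>R R k) = (\<Sum>k\<in>K. (a k - b k) *\<^sub>R R k)"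
  by (simp add: sum_subtractf scaleR_diff_left)

lemma lincomb_add:
  fixes R :: "'b \<Rightarrow> 'a::real_vector"
  shows "(\<Sum>k\<in>K. a k *\<^sub>R R k) + (\<Sum>k\<in>K. b k *\<^sub>R R k) = (\<Sum>k\<in>K. (a k + b k) *\<^sub>R R k)"
  by (simp add: sum.distrib scaleR_add_left)

lemma cone_comb_in:
  fixes S :: "'a::euclidean_space set" and R :: "'b \<Rightarrow> 'a"
  assumes convS: "convex S" and zS: "z \<in> S" and K: "finite K"
   and eps: "\<And>k s. k \<in> K \<Longrightarrow> 0 \<le> s \<Longrightarrow> s \<le> \<epsilon> \<Longrightarrow> z + s *\<^sub>R R k \<in> S"
   and d: "\<forall>k\<in>K. 0 \<le> d k" and t: "0 \<le> t" "t * sum d K \<le> \<epsilon>"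
  shows "z + t *\<^sub>R (\<Sum>k\<in>K. d k *\<^sub>R R k) \<in> S"
proof (cases "sum d K = 0")
  case True
  then have "\<forall>k\<in>K. d k = 0" using sum_nonneg_eq_0_iff[OF K] d by blast
  then show ?thesis using zS by simp
next
  case False
  define D where "D = sum d K"
  have "D \<ge> 0" using d D_def by (simp add: sum_nonneg)
  then have Dpos: "D > 0" using False D_def by simp
  have "(\<Sum>k\<in>K. (d k / D) *\<^sub>R (z + (t * D) *\<^sub>R R k)) \<in> S"
  proof (rule convex_sum[OF K convS])
    show "(\<Sum>k\<in>K. d k / D) = 1" using Dpos D_def by (simp add: sum_divide_distrib[symmetric])
    show "\<And>i. i \<in> K \<Longrightarrow> 0 \<le> d i / D" using d Dpos by simp
    show "\<And>i. i \<in> K \<Longrightarrow> z + (t * D) *\<^sub>R R i \<in> S" using eps t Dpos D_def by simp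
  qed
  moreover have "(\<Sum>k\<in>K. (d k / D) *\<^sub>R (z + (t * D) *\<^sub>R R k)) = z + t *\<^sub>R (\<Sum>k\<in>K. d k *\<^sub>R R k)"
  proof -
    have "(\<Sum>k\<in>K. (d k / D) *\<^sub>R (z + (t * D) *\<^sub>R R k))
        = (\<Sum>k\<in>K. (d k / D) *\<^sub>R z) + (\<Sum>k\<in>K. t *\<^sub>R (d k *\<^sub>R R k))"
      using Dpos by (simp add: scaleR_add_right sum.distrib mult.commute)
    also have "\<dots> = (\<Sum>k\<in>K. d k / D) *\<^sub>R z + t *\<^sub>R (\<Sum>k\<in>K. d k *\<^sub>R R k)"
      by (simp add: scaleR_sum_left scaleR_sum_right)
    also have "(\<Sum>k\<in>K. d k / D) = 1" using Dpos D_def by (simp add: sum_divide_distrib[symmetric])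
    finally show ?thesis by simp
  qed
  ultimately show ?thesis by simp
qed

lemma split_edge:
  fixes S :: "'a::euclidean_space set" and R :: "'b \<Rightarrow> 'a"
  assumes convS: "convex S" and eS: "e face_of S" "aff_dim e = 1"
   and z: "z \<in> e" "z' \<in> e" "z \<noteq> z'"
   and K: "finite K"
   and indep: "\<And>c. (\<Sum>k\<in>K. c k *\<^sub>R R k) = 0 \<Longrightarrow> \<forall>k\<in>K. c k = 0"
   and eps: "\<epsilon> > 0" "\<And>k s. k \<in> K \<Longrightarrow> 0 \<le> s \<Longrightarrow> s \<le> \<epsilon> \<Longrightarrow> z + s *\<^sub>R R k \<in> S"
   and c: "\<forall>k\<in>K. 0 \<le> c k" "z' - z = (\<Sum>k\<in>K. c k *\<^sub>R R k)"
  shows "\<exists>k\<in>K. 0 < c k \<and> (\<forall>j\<in>K. j \<noteq> k \<longrightarrow> c j = 0)"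
proof -
  have eSS: "e \<subseteq> S" using eS face_of_imp_subset by blast
  have zS: "z \<in> S" using z eSS by blast
  obtain k where kK: "k \<in> K" and ck: "c k > 0"
  proof -
    have "\<not> (\<forall>k\<in>K. c k = 0)"
    proof
      assume "\<forall>k\<in>K. c k = 0"
      then have "z' - z = 0" using c(2) by simp
      then show False using z(3) by simp
    qed
    then obtain k where "k \<in> K" "c k \<noteq> 0" by blast
    moreover then have "c k > 0" using c(1) by (metis order_le_less)
    ultimately show ?thesis using that by blast
  qed
  show ?thesis
  proof (rule ccontr)
    assume "\<not> ?thesis"
    then have "\<exists>j\<in>K. j \<noteq> k \<and> c j \<noteq> 0" using kK ck by blast
    then obtain j where jK: "j \<in> K" and jk: "j \<noteq> k" and cj0: "c j \<noteq> 0" by blast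
    have cj: "c j > 0" using cj0 c(1) jK by (metis order_le_less)
    define d1 where "d1 = (\<lambda>i. if i = k then c k else 0)"
    define d2 where "d2 = (\<lambda>i. if i = k then 0 else c i)"
    define C where "C = sum c K"
    have d12: "\<And>i. d1 i + d2 i = c i" unfolding d1_def d2_def by auto
    have d1n: "\<forall>i\<in>K. 0 \<le> d1 i" and d2n: "\<forall>i\<in>K. 0 \<le> d2 i" using c(1) unfolding d1_def d2_def by auto
    have sd1: "sum d1 K = c k" using kK K unfolding d1_def by (simp add: sum.delta)
    have "sum d1 K + sum d2 K = sum (\<lambda>i. d1 i + d2 i) K" by (rule sum.distrib[symmetric])
    then have sd12: "sum d1 K + sum d2 K = C" unfolding C_def d12 .
    have sd2: "sum d2 K \<ge> 0" using d2n by (simp add: sum_nonneg)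
    have Cpos: "C > 0" using sd12 sd1 sd2 ck by linarith
    define t where "t = min 1 (\<epsilon> / C)"
    have tpos: "t > 0" using eps(1) Cpos t_def by simp
    have t1: "t \<le> 1" using t_def by simp
    have "t \<le> \<epsilon> / C" using t_def by simp
    then have tC: "t * C \<le> \<epsilon>" using Cpos by (simp add: pos_le_divide_eq)
    define p where "p = z + t *\<^sub>R (\<Sum>i\<in>K. d1 i *\<^sub>R R i)"
    define q where "q = z + t *\<^sub>R (\<Sum>i\<in>K. d2 i *\<^sub>R R i)"
    have pS: "p \<in> S" unfolding p_def
    proof (rule cone_comb_in[OF convS zS K eps(2) d1n])
      show "0 \<le> t" using tpos by simp
      have "t * sum d1 K \<le> t * C" using sd12 sd2 tpos by (intro mult_left_mono) auto
      then show "t * sum d1 K \<le> \<epsilon>" using tC by linarith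
    qed
    have qS: "q \<in> S" unfolding q_def
    proof (rule cone_comb_in[OF convS zS K eps(2) d2n])
      show "0 \<le> t" using tpos by simp
      have "t * sum d2 K \<le> t * C" using sd12 sd1 ck tpos by (intro mult_left_mono) auto
      then show "t * sum d2 K \<le> \<epsilon>" using tC by linarith
    qed
    have sum12: "(\<Sum>i\<in>K. d1 i *\<^sub>R R i) + (\<Sum>i\<in>K. d2 i *\<^sub>R R i) = z' - z"
      by (simp add: lincomb_add d12 c(2))
    have pq: "p \<noteq> q"
    proof
      assume "p = q"
      then have "(\<Sum>i\<in>K. d1 i *\<^sub>R R i) - (\<Sum>i\<in>K. d2 i *\<^sub>R R i) = 0"
        unfolding p_def q_def using tpos by simp
      then have "(\<Sum>i\<in>K. (d1 i - d2 i) *\<^sub>R R i) = 0" by (simp add: lincomb_diff)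
      then have "d1 j - d2 j = 0" using indep[of "\<lambda>i. d1 i - d2 i"] jK by blast
      then show False using jk cj d1_def d2_def by simp
    qed
    have mid: "midpoint p q = z + (t / 2) *\<^sub>R (z' - z)"
    proof -
      have "midpoint p q = z + (1/2) *\<^sub>R (t *\<^sub>R ((\<Sum>i\<in>K. d1 i *\<^sub>R R i) + (\<Sum>i\<in>K. d2 i *\<^sub>R R i)))"
        unfolding midpoint_def p_def q_def by (simp add: algebra_simps scaleR_2) (simp flip: scaleR_add_left)
      then show ?thesis by (simp add: sum12)
    qed
    have me: "midpoint p q \<in> e"
    proof -
      have "midpoint p q = (1 - t/2) *\<^sub>R z + (t/2) *\<^sub>R z'" unfolding mid by (simp add: algebra_simps)
      moreover have "convex e" using eS face_of_imp_convex by blast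
      moreover have "(1 - t/2) *\<^sub>R z + (t/2) *\<^sub>R z' \<in> e"
        by (rule convexD[OF \<open>convex e\<close> z(1) z(2)]) (use tpos t1 in auto)
      ultimately show ?thesis by simp
    qed
    have "midpoint p q \<in> open_segment p q" using pq by simp
    then have "p \<in> e \<and> q \<in> e" using face_ofD[OF eS(1) _ pS qS me] by blast
    then have pe: "p \<in> e" by blast
    have "affine hull {z, z'} \<subseteq> affine hull e" using z by (intro hull_mono) auto
    moreover have "aff_dim (affine hull {z, z'}) = aff_dim (affine hull e)" using z(3) eS(2) by simp
    ultimately have "affine hull {z, z'} = affine hull e"
      using affine_dim_equal[OF affine_affine_hull affine_affine_hull] by (metis empty_not_insert hull_subset subset_empty)
    moreover have "e \<subseteq> affine hull e" by (rule hull_subset)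
    ultimately have "p \<in> {u *\<^sub>R z + v *\<^sub>R z' |u v. u + v = 1}" using pe affine_hull_2[of z z'] by blast
    then obtain u v where uv: "p = u *\<^sub>R z + v *\<^sub>R z'" "u + v = 1" by blast
    have "u = 1 - v" using uv(2) by simp
    then have "p = (1 - v) *\<^sub>R z + v *\<^sub>R z'" using uv(1) by simp
    then have "p = z + v *\<^sub>R (z' - z)" by (simp add: algebra_simps)
    then have "t *\<^sub>R (\<Sum>i\<in>K. d1 i *\<^sub>R R i) = v *\<^sub>R (\<Sum>i\<in>K. c i *\<^sub>R R i)" unfolding p_def c(2) by simp
    then have "(\<Sum>i\<in>K. (t * d1 i) *\<^sub>R R i) - (\<Sum>i\<in>K. (v * c i) *\<^sub>R R i) = 0"
      by (simp add: scaleR_sum_right)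
    then have "(\<Sum>i\<in>K. (t * d1 i - v * c i) *\<^sub>R R i) = 0" by (simp add: lincomb_diff)
    then have e0: "\<forall>i\<in>K. t * d1 i - v * c i = 0" using indep[of "\<lambda>i. t * d1 i - v * c i"] by blast
    have "t * d1 j - v * c j = 0" using e0 jK by blast
    moreover have "d1 j = 0" using jk d1_def by simp
    ultimately have "v * c j = 0" by simp
    then have v0: "v = 0" using cj by simp
    have "t * d1 k - v * c k = 0" using e0 kK by blast
    moreover have "d1 k = c k" using d1_def by simp
    ultimately have "t * c k = 0" using v0 by simp
    then show False using tpos ck by simp
  qed
qed



lemma incone_span:
  assumes "incone N z y" shows "y \<in> span ((\<lambda>u. u - z) ` N)"
proof -
  obtain \<mu> where \<mu>: "y = (\<Sum>u\<in>N. \<mu> u *\<^sub>R (u - z))" using assms incone_def by blast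
  show ?thesis unfolding \<mu>
    by (intro span_sum span_scale span_base) auto
qed

lemma aff_dim_le_cone:
  fixes S :: "'a::euclidean_space set"
  assumes fin: "finite N" and zS: "z \<in> S" and cone: "\<And>y. y \<in> S \<Longrightarrow> incone N z (y - z)"
  shows "aff_dim S \<le> int (dim ((\<lambda>u. u - z) ` N))"
    and "dim ((\<lambda>u. u - z) ` N) \<le> card ((\<lambda>u. u - z) ` N)"
proof -
  define E where "E = (\<lambda>u. u - z) ` N"
  have "aff_dim S = int (dim ((+) (- z) ` S))" using aff_dim_eq_dim hull_inc[OF zS] by blast
  moreover have "(+) (- z) ` S \<subseteq> span E"
  proof
    fix x assume "x \<in> (+) (- z) ` S"
    then obtain y where "y \<in> S" "x = y - z" by auto
    then show "x \<in> span E" using cone incone_span E_def by blast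
  qed
  then have "dim ((+) (- z) ` S) \<le> dim (span E)" by (rule dim_subset)
  then have "dim ((+) (- z) ` S) \<le> dim E" by simp
  ultimately show "aff_dim S \<le> int (dim ((\<lambda>u. u - z) ` N))" using E_def by simp
  show "dim ((\<lambda>u. u - z) ` N) \<le> card ((\<lambda>u. u - z) ` N)"
    using dim_le_card[OF span_superset[of "(\<lambda>u. u - z) ` N"]] fin by simp
qed

lemma indep_from_dim:
  fixes S :: "'a::euclidean_space set"
  assumes fin: "finite N" and zS: "z \<in> S" and cone: "\<And>y. y \<in> S \<Longrightarrow> incone N z (y - z)"
    and dimS: "aff_dim S = int (card N)"
    and c: "(\<Sum>u\<in>N. c u *\<^sub>R (u - z)) = 0"
  shows "\<forall>u\<in>N. c u = 0"
proof -
  define E where "E = (\<lambda>u. u - z) ` N"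
  have c1: "card E \<le> card N" using card_image_le fin E_def by blast
  have c2: "card N \<le> dim E" using aff_dim_le_cone(1)[OF fin zS cone] dimS E_def by simp
  have c3: "dim E \<le> card E" using aff_dim_le_cone(2)[OF fin zS cone] E_def by simp
  have cE: "card E = card N" and dE: "dim E = card E" using c1 c2 c3 by auto
  have inj: "inj_on (\<lambda>u. u - z) N" using eq_card_imp_inj_on[OF fin, of "\<lambda>u. u - z"] cE unfolding E_def by simp
  have finE: "finite E" using fin E_def by simp
  have "independent E" using card_eq_dim[of E "span E"] span_superset[of E] dE finE by simp
  then have ind: "\<forall>c'. (\<Sum>v\<in>E. c' v *\<^sub>R v) = 0 \<longrightarrow> (\<forall>v\<in>E. c' v = 0)"
    unfolding independent_explicit by simp
  define c' where "c' = (\<lambda>v. c (v + z))"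
  have "(\<Sum>v\<in>E. c' v *\<^sub>R v) = (\<Sum>u\<in>N. c' (u - z) *\<^sub>R (u - z))"
    unfolding E_def using sum.reindex[OF inj, of "\<lambda>v. c' v *\<^sub>R v"] by simp
  also have "\<dots> = 0" using c c'_def by simp
  finally have "\<forall>v\<in>E. c' v = 0" using ind by blast
  then show ?thesis unfolding E_def c'_def by simp
qed



lemma lin_aux1: fixes X Y Z s m l :: real
  assumes "Y \<le> Z" "Z + s \<le> m" "X \<le> Y" "m \<le> l" "0 \<le> s" shows "0 \<le> l - X"
  using assms by linarith

lemma lin_aux2: fixes X Y Z s m l :: real
  assumes "Y \<le> Z" "Z + s \<le> m" "- Y \<le> X" "m \<le> 1 - l" "0 \<le> s" shows "0 \<le> 1 - (l - X) - s"
  using assms by linarith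

theorem lemma2p15:
  fixes P T P' F :: "'a::euclidean_space set" and x w v a :: 'a and b :: real
  assumes polyP: "polytope P"
    and "x extreme_point_of P"
    and TP: "T face_of P" and "x \<in> T"
    and trunc: "truncating_halfspace P T a b"
    and P'def: "P' = P \<inter> {y. a \<bullet> y \<le> b}"
    and Fdef: "F = P' \<inter> {y. a \<bullet> y = b}"
    and adjxw: "poly_adjacent P x w" and wT: "w \<notin> T"
    and vP': "v extreme_point_of P'" and vF: "v \<in> F" and adjwv: "poly_adjacent P' w v"
    and simpw: "simple_at P w"
  shows "simple_at P' v"
proof -
  have aT: "\<And>t. t extreme_point_of T \<Longrightarrow> a \<bullet> t > b"
    and aP: "\<And>u. u extreme_point_of P \<Longrightarrow> u \<notin> T \<Longrightarrow> a \<bullet> u < b"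
    using trunc unfolding truncating_halfspace_def by auto
  have convP: "convex P" using polyP polytope_imp_convex by blast
  have polyP': "polytope P'" unfolding P'def
    using polytope_Int_polyhedron[OF polyP polyhedron_halfspace_le] by blast
  have convP': "convex P'" using polyP' polytope_imp_convex by blast
  have wP: "w extreme_point_of P" using simpw unfolding simple_at_def by blast
  have wP0: "w \<in> P" using wP unfolding extreme_point_of_def by blast
  have aw: "a \<bullet> w < b" using aP[OF wP wT] .
  have vP'0: "v \<in> P'" using vP' unfolding extreme_point_of_def by blast
  have vP: "v \<in> P" using vP'0 P'def by blast
  have av: "a \<bullet> v = b" using vF Fdef by blast
  have wP': "w \<in> P'" using wP0 aw P'def by simp
  define Nw where "Nw = {u. poly_adjacent P w u}"
  have finNw: "finite Nw"
    by (rule finite_subset[OF _ polytope_ext(1)[OF polyP]]) (auto simp: Nw_def poly_adjacent_def)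
  have cardNw: "int (card Nw) = aff_dim P" using simpw unfolding simple_at_def poly_degree_def Nw_def by simp
  have coneW: "\<And>y. y \<in> P \<Longrightarrow> incone Nw w (y - w)" using vertex_cone[OF polyP wP] Nw_def by simp
  have indW: "\<And>c. (\<Sum>u\<in>Nw. c u *\<^sub>R (u - w)) = 0 \<Longrightarrow> \<forall>u\<in>Nw. c u = 0"
    using indep_from_dim[OF finNw wP0 coneW] cardNw by simp
  have uP: "\<And>u. u \<in> Nw \<Longrightarrow> u \<in> P" unfolding Nw_def poly_adjacent_def extreme_point_of_def by blast
  define \<alpha> where "\<alpha> u = a \<bullet> (u - w)" for u
  define M where "M = (\<Sum>u\<in>Nw. \<bar>\<alpha> u\<bar>)"
  have Mnn: "M \<ge> 0" unfolding M_def by (simp add: sum_nonneg)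
  have alM: "\<And>u. u \<in> Nw \<Longrightarrow> \<bar>\<alpha> u\<bar> \<le> M"
    unfolding M_def using finNw by (intro member_le_sum) auto
  obtain e0 where e0: "e0 edge_of P'" "w \<in> e0" "v \<in> e0" and wv: "w \<noteq> v"
    using adjwv unfolding poly_adjacent_def by blast
  define \<epsilon> where "\<epsilon> = min 1 ((b - a \<bullet> w) / (M + 1))"
  have epos: "\<epsilon> > 0" unfolding \<epsilon>_def using aw Mnn by simp
  have epsW: "w + s *\<^sub>R (u - w) \<in> P'" if "u \<in> Nw" "0 \<le> s" "s \<le> \<epsilon>" for u s
  proof -
    have s1: "s \<le> 1" using that \<epsilon>_def by simp
    have "(1 - s) *\<^sub>R w + s *\<^sub>R u \<in> P" using convexD[OF convP wP0 uP[OF that(1)]] that s1 by simp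
    moreover have "(1 - s) *\<^sub>R w + s *\<^sub>R u = w + s *\<^sub>R (u - w)" by (simp add: algebra_simps)
    ultimately have inP: "w + s *\<^sub>R (u - w) \<in> P" by simp
    have "s * \<alpha> u \<le> s * M" using alM[OF that(1)] that(2) by (intro mult_left_mono) auto
    also have "\<dots> \<le> s * (M + 1)" using that(2) by (simp add: distrib_left)
    also have "\<dots> \<le> \<epsilon> * (M + 1)" using that(3) Mnn by (intro mult_right_mono) auto
    also have "\<dots> \<le> b - a \<bullet> w"
    proof -
      have "\<epsilon> \<le> (b - a \<bullet> w) / (M + 1)" unfolding \<epsilon>_def by simp
      then show ?thesis using Mnn by (simp add: pos_le_divide_eq)
    qed
    finally have "a \<bullet> (w + s *\<^sub>R (u - w)) \<le> b" unfolding \<alpha>_def by (simp add: inner_add_right)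
    then show ?thesis using inP P'def by simp
  qed
  obtain \<mu>v where \<mu>v: "\<forall>u\<in>Nw. 0 \<le> \<mu>v u" "v - w = (\<Sum>u\<in>Nw. \<mu>v u *\<^sub>R (u - w))"
    using coneW[OF vP] unfolding incone_def by blast
  have e0f: "e0 face_of P'" "aff_dim e0 = 1" using e0(1) unfolding edge_of_def by auto
  obtain u1 where u1: "u1 \<in> Nw" "0 < \<mu>v u1" "\<forall>j\<in>Nw. j \<noteq> u1 \<longrightarrow> \<mu>v j = 0"
    using split_edge[OF convP' e0f e0(2) e0(3) wv finNw indW epos epsW \<mu>v] by blast
  define lam where "lam = \<mu>v u1"
  have lpos: "lam > 0" using u1 lam_def by simp
  have "(\<Sum>u\<in>Nw. \<mu>v u *\<^sub>R (u - w)) = (\<Sum>u\<in>Nw. if u = u1 then \<mu>v u1 *\<^sub>R (u1 - w) else 0)"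
    by (rule sum.cong) (use u1 in auto)
  also have "\<dots> = \<mu>v u1 *\<^sub>R (u1 - w)" using u1(1) finNw by (simp add: sum.delta)
  finally have vw: "v - w = lam *\<^sub>R (u1 - w)" using \<mu>v(2) lam_def by simp
  have u1P: "u1 extreme_point_of P" using u1(1) unfolding Nw_def poly_adjacent_def by blast
  have lne1: "lam \<noteq> 1"
  proof
    assume "lam = 1"
    then have "v = u1" using vw by simp
    then have au1: "a \<bullet> u1 = b" using av by simp
    show False
    proof (cases "u1 \<in> T")
      case True
      then have "u1 extreme_point_of T" using extreme_point_of_face[OF TP] u1P by blast
      then show False using aT au1 by fastforce
    next
      case False
      then show False using aP[OF u1P] au1 by simp
    qed
  qed
  have lle1: "\<not> lam > 1"
  proof
    assume l1: "lam > 1"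
    have "u1 = (1 - 1/lam) *\<^sub>R w + (1/lam) *\<^sub>R v"
    proof -
      have "(1 - 1/lam) *\<^sub>R w + (1/lam) *\<^sub>R v = w + (1/lam) *\<^sub>R (v - w)" by (simp add: algebra_simps)
      also have "\<dots> = w + (1/lam) *\<^sub>R (lam *\<^sub>R (u1 - w))" using vw by simp
      also have "\<dots> = u1" using lpos by simp
      finally show ?thesis by simp
    qed
    moreover have "0 < 1/lam" "1/lam < 1" using l1 by auto
    ultimately have "u1 \<in> open_segment w v" using wv in_segment(2) by blast
    then show False using u1P wP0 vP unfolding extreme_point_of_def by blast
  qed
  have l1: "lam < 1" using lne1 lle1 by simp
  have lal: "lam * \<alpha> u1 = b - a \<bullet> w"
  proof -
    have "a \<bullet> (v - w) = lam * \<alpha> u1" using vw \<alpha>_def by simp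
    then show ?thesis using av by (simp add: inner_diff_right)
  qed
  have "lam * \<alpha> u1 > 0" using lal aw by simp
  then have al1: "\<alpha> u1 > 0" using lpos by (simp add: zero_less_mult_iff)
  define A where "A = Nw - {u1}"
  have finA: "finite A" using finNw A_def by simp
  define r where "r u = (if u = u1 then w - v else (u - w) - (\<alpha> u / \<alpha> u1) *\<^sub>R (u1 - w))" for u
  define G where "G c u = (if u = u1 then - lam * c u1 - (\<Sum>k\<in>A. c k * \<alpha> k / \<alpha> u1) else c u)"
    for c :: "'a \<Rightarrow> real" and u
  have ray_expand: "(\<Sum>k\<in>Nw. c k *\<^sub>R r k) = (\<Sum>u\<in>Nw. G c u *\<^sub>R (u - w))" for c
  proof -
    have "r u1 = w - v" unfolding r_def by simp
    also have "\<dots> = - (v - w)" by simp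
    also have "\<dots> = - lam *\<^sub>R (u1 - w)" using vw by simp
    finally have ru1: "r u1 = - lam *\<^sub>R (u1 - w)" .
    have "(\<Sum>k\<in>A. c k *\<^sub>R r k) = (\<Sum>k\<in>A. c k *\<^sub>R (k - w) - (c k * \<alpha> k / \<alpha> u1) *\<^sub>R (u1 - w))"
      by (rule sum.cong) (auto simp: A_def r_def scaleR_diff_right)
    also have "\<dots> = (\<Sum>k\<in>A. c k *\<^sub>R (k - w)) - (\<Sum>k\<in>A. c k * \<alpha> k / \<alpha> u1) *\<^sub>R (u1 - w)"
      by (simp add: sum_subtractf scaleR_sum_left)
    finally have L: "(\<Sum>k\<in>A. c k *\<^sub>R r k) = (\<Sum>k\<in>A. c k *\<^sub>R (k - w)) - (\<Sum>k\<in>A. c k * \<alpha> k / \<alpha> u1) *\<^sub>R (u1 - w)" .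
    have R: "(\<Sum>u\<in>A. G c u *\<^sub>R (u - w)) = (\<Sum>k\<in>A. c k *\<^sub>R (k - w))"
      by (rule sum.cong) (auto simp: A_def G_def)
    have Gu1: "G c u1 = - lam * c u1 - (\<Sum>k\<in>A. c k * \<alpha> k / \<alpha> u1)" by (simp add: G_def)
    have "(\<Sum>k\<in>Nw. c k *\<^sub>R r k) = c u1 *\<^sub>R r u1 + (\<Sum>k\<in>A. c k *\<^sub>R r k)"
      unfolding A_def by (rule sum.remove[OF finNw u1(1)])
    also have "\<dots> = G c u1 *\<^sub>R (u1 - w) + (\<Sum>u\<in>A. G c u *\<^sub>R (u - w))"
      unfolding L R ru1 Gu1 by (simp add: algebra_simps)
    also have "\<dots> = (\<Sum>u\<in>Nw. G c u *\<^sub>R (u - w))"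
      unfolding A_def by (rule sum.remove[OF finNw u1(1), symmetric])
    finally show ?thesis .
  qed
  have rind: "\<forall>k\<in>Nw. c k = 0" if "(\<Sum>k\<in>Nw. c k *\<^sub>R r k) = 0" for c
  proof -
    have G0: "\<forall>u\<in>Nw. G c u = 0" using indW[of "G c"] that ray_expand by simp
    have cA: "\<forall>k\<in>A. c k = 0"
    proof
      fix k assume "k \<in> A"
      then have kk: "k \<in> Nw" "k \<noteq> u1" by (auto simp: A_def)
      then have "G c k = 0" using G0 by blast
      then show "c k = 0" using kk(2) by (simp add: G_def)
    qed
    then have "(\<Sum>k\<in>A. c k * \<alpha> k / \<alpha> u1) = 0" by simp
    moreover have "G c u1 = 0" using G0 u1(1) by blast
    ultimately have "- lam * c u1 = 0" by (simp add: G_def)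
    then have "c u1 = 0" using lpos by simp
    then show ?thesis using cA A_def by auto
  qed
  define M' where "M' = (\<Sum>u\<in>Nw. \<bar>\<alpha> u\<bar> / \<alpha> u1)"
  have M'nn: "M' \<ge> 0" unfolding M'_def using al1 by (simp add: sum_nonneg)
  have alM': "\<And>u. u \<in> Nw \<Longrightarrow> \<bar>\<alpha> u\<bar> / \<alpha> u1 \<le> M'"
    unfolding M'_def using finNw al1 by (intro member_le_sum) auto
  define \<epsilon>' where "\<epsilon>' = min lam (1 - lam) / (M' + 1)"
  have e'pos: "\<epsilon>' > 0" unfolding \<epsilon>'_def using lpos l1 M'nn by simp
  have e'b: "\<epsilon>' * (M' + 1) = min lam (1 - lam)" unfolding \<epsilon>'_def using M'nn by simp
  have epsV: "v + s *\<^sub>R r k \<in> P'" if kN: "k \<in> Nw" and s0: "0 \<le> s" and se: "s \<le> \<epsilon>'" for k s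
  proof (cases "k = u1")
    case True
    have "s * 1 \<le> s * (M' + 1)" using s0 M'nn by (intro mult_left_mono) auto
    also have "\<dots> \<le> \<epsilon>' * (M' + 1)" using se M'nn by (intro mult_right_mono) auto
    finally have "s \<le> min lam (1 - lam)" using e'b by simp
    then have s1: "s \<le> 1" using l1 by simp
    have "(1 - s) *\<^sub>R v + s *\<^sub>R w \<in> P'" using convexD[OF convP' vP'0 wP'] s0 s1 by simp
    moreover have "(1 - s) *\<^sub>R v + s *\<^sub>R w = v + s *\<^sub>R r k" using True unfolding r_def by (simp add: algebra_simps)
    ultimately show ?thesis by simp
  next
    case False
    define B where "B = lam - s * (\<alpha> k / \<alpha> u1)"
    have sM: "s * (\<bar>\<alpha> k\<bar> / \<alpha> u1) \<le> s * M'" using alM'[OF kN] s0 by (intro mult_left_mono) auto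
    have sM1: "s * M' + s \<le> min lam (1 - lam)"
    proof -
      have "s * M' + s = s * (M' + 1)" by (simp add: algebra_simps)
      also have "\<dots> \<le> \<epsilon>' * (M' + 1)" using se M'nn by (intro mult_right_mono) auto
      finally show ?thesis using e'b by simp
    qed
    have q1: "\<alpha> k / \<alpha> u1 \<le> \<bar>\<alpha> k\<bar> / \<alpha> u1" using al1 by (intro divide_right_mono) auto
    have q2': "(- \<bar>\<alpha> k\<bar>) / \<alpha> u1 \<le> \<alpha> k / \<alpha> u1" using al1 by (intro divide_right_mono) auto
    then have q2: "- (\<bar>\<alpha> k\<bar> / \<alpha> u1) \<le> \<alpha> k / \<alpha> u1" by simp
    have p1: "s * (\<alpha> k / \<alpha> u1) \<le> s * (\<bar>\<alpha> k\<bar> / \<alpha> u1)" using q1 s0 by (rule mult_left_mono)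
    have p2: "s * (- (\<bar>\<alpha> k\<bar> / \<alpha> u1)) \<le> s * (\<alpha> k / \<alpha> u1)" using q2 s0 by (rule mult_left_mono)
    have mm: "min lam (1 - lam) \<le> lam" "min lam (1 - lam) \<le> 1 - lam" by auto
    have B0: "B \<ge> 0" unfolding B_def by (rule lin_aux1[OF sM sM1 p1 mm(1) s0])
    have p2': "- (s * (\<bar>\<alpha> k\<bar> / \<alpha> u1)) \<le> s * (\<alpha> k / \<alpha> u1)" using p2 by simp
    have C0: "1 - B - s \<ge> 0" unfolding B_def by (rule lin_aux2[OF sM sM1 p2' mm(2) s0])
    have eq: "v + s *\<^sub>R r k = (1 - B - s) *\<^sub>R w + B *\<^sub>R u1 + s *\<^sub>R k"
    proof -
      have "v = w + lam *\<^sub>R (u1 - w)" using vw by (simp add: algebra_simps)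
      then show ?thesis unfolding r_def B_def using False by (simp add: algebra_simps)
    qed
    have "(1 - B - s) *\<^sub>R w + B *\<^sub>R u1 + s *\<^sub>R k \<in> convex hull {w, u1, k}"
      unfolding convex_hull_3
      by (rule CollectI, rule exI[of _ "1 - B - s"], rule exI[of _ B], rule exI[of _ s]) (use B0 C0 s0 in simp)
    moreover have "convex hull {w, u1, k} \<subseteq> P"
      by (rule hull_minimal) (use wP0 uP[OF u1(1)] uP[OF kN] convP in auto)
    ultimately have inP: "v + s *\<^sub>R r k \<in> P" using eq by auto
    have "a \<bullet> (v + s *\<^sub>R r k) = a \<bullet> v + s * (\<alpha> k - (\<alpha> k / \<alpha> u1) * \<alpha> u1)"
    proof -
      have ar: "a \<bullet> r k = \<alpha> k - (\<alpha> k / \<alpha> u1) * \<alpha> u1"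
        unfolding r_def using False by (simp add: inner_diff_right \<alpha>_def)
      show ?thesis by (simp add: inner_add_right ar)
    qed
    also have "\<dots> = b" using av al1 by simp
    finally show ?thesis using inP P'def by simp
  qed
  have dec: "\<exists>c. (\<forall>k\<in>Nw. 0 \<le> c k) \<and> u' - v = (\<Sum>k\<in>Nw. c k *\<^sub>R r k)" if u'P': "u' \<in> P'" for u'
  proof -
    have u'P: "u' \<in> P" and au': "a \<bullet> u' \<le> b" using u'P' P'def by auto
    obtain \<mu> where \<mu>: "\<forall>u\<in>Nw. 0 \<le> \<mu> u" "u' - w = (\<Sum>u\<in>Nw. \<mu> u *\<^sub>R (u - w))"
      using coneW[OF u'P] unfolding incone_def by blast
    define S where "S = (\<Sum>j\<in>A. \<mu> j * \<alpha> j / \<alpha> u1)"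
    define c where "c k = (if k = u1 then (lam - \<mu> u1 - S) / lam else \<mu> k)" for k
    have cA: "(\<Sum>j\<in>A. c j * \<alpha> j / \<alpha> u1) = S" unfolding S_def
      by (rule sum.cong) (auto simp: A_def c_def)
    have Gc: "G c u = \<mu> u - (if u = u1 then lam else 0)" if "u \<in> Nw" for u
    proof (cases "u = u1")
      case True
      have "G c u1 = - lam * c u1 - (\<Sum>j\<in>A. c j * \<alpha> j / \<alpha> u1)" by (simp add: G_def)
      also have "\<dots> = - lam * ((lam - \<mu> u1 - S) / lam) - S" unfolding cA by (simp add: c_def)
      also have "\<dots> = \<mu> u1 - lam" using lpos by (simp add: field_simps)
      finally show ?thesis using True by simp
    next
      case False then show ?thesis by (simp add: G_def c_def)
    qed
    have "(\<Sum>k\<in>Nw. c k *\<^sub>R r k) = (\<Sum>u\<in>Nw. G c u *\<^sub>R (u - w))" by (rule ray_expand)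
    also have "\<dots> = (\<Sum>u\<in>Nw. \<mu> u *\<^sub>R (u - w) - (if u = u1 then lam *\<^sub>R (u1 - w) else 0))"
      by (rule sum.cong) (auto simp: Gc scaleR_diff_left)
    also have "\<dots> = (\<Sum>u\<in>Nw. \<mu> u *\<^sub>R (u - w)) - lam *\<^sub>R (u1 - w)"
      using u1(1) finNw by (simp add: sum_subtractf sum.delta)
    also have "\<dots> = u' - v" using \<mu>(2) vw by (simp add: algebra_simps)
    finally have eqc: "u' - v = (\<Sum>k\<in>Nw. c k *\<^sub>R r k)" by simp
    have "a \<bullet> (u' - w) = (\<Sum>u\<in>Nw. \<mu> u * \<alpha> u)" unfolding \<mu>(2) \<alpha>_def by (simp add: inner_sum_right)
    also have "\<dots> = \<mu> u1 * \<alpha> u1 + (\<Sum>j\<in>A. \<mu> j * \<alpha> j)" unfolding A_def by (rule sum.remove[OF finNw u1(1)])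
    also have "(\<Sum>j\<in>A. \<mu> j * \<alpha> j) = S * \<alpha> u1" unfolding S_def using al1
      by (simp add: sum_divide_distrib[symmetric])
    finally have "a \<bullet> (u' - w) = (\<mu> u1 + S) * \<alpha> u1" by (simp add: algebra_simps)
    moreover have "a \<bullet> (u' - w) \<le> lam * \<alpha> u1" using au' lal by (simp add: inner_diff_right)
    ultimately have "(\<mu> u1 + S) * \<alpha> u1 \<le> lam * \<alpha> u1" by simp
    then have "\<mu> u1 + S \<le> lam" using al1 by simp
    then have "c u1 \<ge> 0" unfolding c_def using lpos by simp
    moreover have "\<forall>k\<in>Nw. k \<noteq> u1 \<longrightarrow> c k \<ge> 0" using \<mu>(1) c_def by simp
    ultimately have "\<forall>k\<in>Nw. 0 \<le> c k" by metis
    then show ?thesis using eqc by blast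
  qed
  define N where "N = {u. poly_adjacent P' v u}"
  have finN: "finite N"
    by (rule finite_subset[OF _ polytope_ext(1)[OF polyP']]) (auto simp: N_def poly_adjacent_def)
  have ray: "\<exists>k\<in>Nw. \<exists>c>0. u' - v = c *\<^sub>R r k" if u'N: "u' \<in> N" for u'
  proof -
    obtain e1 where e1: "e1 edge_of P'" "v \<in> e1" "u' \<in> e1" and vu: "v \<noteq> u'"
      and u'E: "u' extreme_point_of P'"
      using u'N unfolding N_def poly_adjacent_def by blast
    have e1f: "e1 face_of P'" "aff_dim e1 = 1" using e1(1) unfolding edge_of_def by auto
    have u'P': "u' \<in> P'" using u'E unfolding extreme_point_of_def by blast
    obtain c where c: "\<forall>k\<in>Nw. 0 \<le> c k" "u' - v = (\<Sum>k\<in>Nw. c k *\<^sub>R r k)" using dec[OF u'P'] by blast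
    obtain k where k: "k \<in> Nw" "0 < c k" "\<forall>j\<in>Nw. j \<noteq> k \<longrightarrow> c j = 0"
      using split_edge[OF convP' e1f e1(2) e1(3) vu finNw rind e'pos epsV c] by blast
    have "(\<Sum>j\<in>Nw. c j *\<^sub>R r j) = (\<Sum>j\<in>Nw. if j = k then c k *\<^sub>R r k else 0)"
      by (rule sum.cong) (use k in auto)
    also have "\<dots> = c k *\<^sub>R r k" using k(1) finNw by (simp add: sum.delta)
    finally have "u' - v = c k *\<^sub>R r k" using c(2) by simp
    then show ?thesis using k(1,2) by blast
  qed
  define f where "f u' = (SOME k. k \<in> Nw \<and> (\<exists>c>0. u' - v = c *\<^sub>R r k))" for u'
  have fN: "f u' \<in> Nw \<and> (\<exists>c>0. u' - v = c *\<^sub>R r (f u'))" if "u' \<in> N" for u'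
    unfolding f_def by (rule someI_ex) (use ray[OF that] in blast)
  have nest: False if pN: "p \<in> N" and qN: "q \<in> N" and cp: "0 < cp" and cpq: "cp < cq"
    and peq: "p - v = cp *\<^sub>R R" and qeq: "q - v = cq *\<^sub>R R" for p q cp cq R
  proof -
    have pE: "p extreme_point_of P'" and qE: "q extreme_point_of P'" and qv: "v \<noteq> q"
      using pN qN unfolding N_def poly_adjacent_def by auto
    have cq: "cq > 0" using cp cpq by simp
    define t where "t = cp / cq"
    have t: "0 < t" "t < 1" using cp cpq cq t_def by auto
    have tc: "t * cq = cp" using cq t_def by simp
    have "(1 - t) *\<^sub>R v + t *\<^sub>R q = v + t *\<^sub>R (q - v)" by (simp add: algebra_simps)
    also have "\<dots> = v + (t * cq) *\<^sub>R R" using qeq by simp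
    also have "\<dots> = v + cp *\<^sub>R R" using tc by simp
    also have "\<dots> = p" using peq by (simp add: algebra_simps)
    finally have peq2: "p = (1 - t) *\<^sub>R v + t *\<^sub>R q" by simp
    have "p \<in> open_segment v q" unfolding in_segment(2) using t qv peq2 by blast
    moreover have "q \<in> P'" using qE unfolding extreme_point_of_def by blast
    ultimately show False using pE vP'0 unfolding extreme_point_of_def by blast
  qed
  have injf: "inj_on f N"
  proof (rule inj_onI)
    fix p q assume pN: "p \<in> N" and qN: "q \<in> N" and fpq: "f p = f q"
    obtain cp where cp: "cp > 0" "p - v = cp *\<^sub>R r (f p)" using fN[OF pN] by blast
    obtain cq where cq: "cq > 0" "q - v = cq *\<^sub>R r (f p)" using fN[OF qN] fpq by auto
    have "\<not> cp < cq" using nest[OF pN qN cp(1) _ cp(2) cq(2)] by blast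
    moreover have "\<not> cq < cp" using nest[OF qN pN cq(1) _ cq(2) cp(2)] by blast
    ultimately have "cp = cq" by simp
    then have "p - v = q - v" using cp cq by simp
    then show "p = q" by simp
  qed
  have "f ` N \<subseteq> Nw" using fN by blast
  then have cardle: "card N \<le> card Nw" using card_inj_on_le[OF injf _ finNw] by blast
  have coneV: "\<And>y. y \<in> P' \<Longrightarrow> incone N v (y - v)" using vertex_cone[OF polyP' vP'] N_def by simp
  have "aff_dim P' \<le> int (card ((\<lambda>u. u - v) ` N))"
    using aff_dim_le_cone[OF finN vP'0 coneV] by linarith
  also have "card ((\<lambda>u. u - v) ` N) \<le> card N" using card_image_le finN by blast
  finally have lowb: "aff_dim P' \<le> int (card N)" by simp
  have affeq: "aff_dim P' = aff_dim P"
  proof -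
    have "affine hull (P \<inter> {y. a \<bullet> y < b}) = affine hull P"
      using affine_hull_convex_Int_open[OF convP open_halfspace_lt] wP0 aw by blast
    then have e: "aff_dim (P \<inter> {y. a \<bullet> y < b}) = aff_dim P"
      by (metis aff_dim_affine_hull)
    have "P \<inter> {y. a \<bullet> y < b} \<subseteq> P'" using P'def by auto
    then have "aff_dim (P \<inter> {y. a \<bullet> y < b}) \<le> aff_dim P'" by (rule aff_dim_subset)
    moreover have "aff_dim P' \<le> aff_dim P" using P'def by (intro aff_dim_subset) auto
    ultimately show ?thesis using e by linarith
  qed
  have "int (card N) = aff_dim P'" using lowb cardle cardNw affeq by linarith
  then show ?thesis unfolding simple_at_def poly_degree_def N_def using vP' by simp
qed


end
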